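(* Let $H_{9,4}$ be the graph on $72$ vertices obtained from the Cartesian product $K_9\square K_4$ (the line graph of $K_{9,4}$, with vertices $v_{i,j}$, $1\le i\le 9$, $1\le j\le 4$, where $v_{i,j}v_{i',j'}$ is an edge iff exactly one of $i=i'$, $j=j'$ holds) by attaching a pendant edge at each vertex, i.e. adding new vertices $w_{i,j}$ and edges $v_{i,j}w_{i,j}$. Then $H_{9,4}$ is perfect and $p(H_{9,4})=c(H_{9,4})=3$.
   Context: A graph $G$ is perfect if every induced subgraph $H$ satisfies $\omega(H)=\chi(H)$. A comparability graph is a graph admitting a transitive orientation. $p(G)$ is the minimum number $m$ such that $E(G)$ is the union of the edge sets of $m$ pairwise edge-disjoint comparability subgraphs of $G$; $c(G)$ is the minimum number of comparability subgraphs of $G$ (not necessarily edge-disjoint) whose edge sets cover $E(G)$. *)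

theory Defs
  imports Main
begin

text \<open>Finite simple graphs are given by a vertex set V and a set E of
  2-element subsets of V (undirected edges).\<close>

definition is_clique :: "'a set \<Rightarrow> 'a set set \<Rightarrow> 'a set \<Rightarrow> bool" where
  "is_clique V E K \<longleftrightarrow> K \<subseteq> V \<and> (\<forall>u\<in>K. \<forall>v\<in>K. u \<noteq> v \<longrightarrow> {u, v} \<in> E)"

definition clique_number :: "'a set \<Rightarrow> 'a set set \<Rightarrow> nat" where
  "clique_number V E = Max (card ` {K. is_clique V E K})"

definition proper_colouring :: "'a set \<Rightarrow> 'a set set \<Rightarrow> nat \<Rightarrow> ('a \<Rightarrow> nat) \<Rightarrow> bool" where
  "proper_colouring V E k f \<longleftrightarrow>
     (\<forall>v\<in>V. f v < k) \<and> (\<forall>u\<in>V. \<forall>v\<in>V. {u, v} \<in> E \<longrightarrow> f u \<noteq> f v)"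

definition chromatic_number :: "'a set \<Rightarrow> 'a set set \<Rightarrow> nat" where
  "chromatic_number V E = (LEAST k. \<exists>f. proper_colouring V E k f)"

definition induced_edges :: "'a set set \<Rightarrow> 'a set \<Rightarrow> 'a set set" where
  "induced_edges E S = {e \<in> E. e \<subseteq> S}"

definition perfect :: "'a set \<Rightarrow> 'a set set \<Rightarrow> bool" where
  "perfect V E \<longleftrightarrow> (\<forall>S\<subseteq>V. clique_number S (induced_edges E S)
                                = chromatic_number S (induced_edges E S))"

definition transitive_orientation :: "'a set set \<Rightarrow> ('a \<times> 'a) set \<Rightarrow> bool" where
  "transitive_orientation F R \<longleftrightarrow>
     (\<forall>(u, v)\<in>R. u \<noteq> v \<and> {u, v} \<in> F) \<and>
     (\<forall>e\<in>F. \<exists>u v. e = {u, v} \<and> u \<noteq> v \<and> ((u, v) \<in> R \<or> (v, u) \<in> R)) \<and>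
     (\<forall>u v. (u, v) \<in> R \<longrightarrow> (v, u) \<notin> R) \<and>
     trans R"

text \<open>A subgraph with edge set F is a comparability graph iff F admits a
  transitive orientation (isolated vertices are irrelevant).\<close>

definition comparability_edges :: "'a set set \<Rightarrow> bool" where
  "comparability_edges F \<longleftrightarrow> (\<exists>R. transitive_orientation F R)"

definition comp_partition_number :: "'a set set \<Rightarrow> nat" where
  "comp_partition_number E = (LEAST m. \<exists>Fs :: nat \<Rightarrow> 'a set set.
      (\<forall>i<m. Fs i \<subseteq> E \<and> comparability_edges (Fs i)) \<and>
      (\<Union>i<m. Fs i) = E \<and>
      (\<forall>i<m. \<forall>j<m. i \<noteq> j \<longrightarrow> Fs i \<inter> Fs j = {}))"

definition comp_cover_number :: "'a set set \<Rightarrow> nat" where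
  "comp_cover_number E = (LEAST m. \<exists>Fs :: nat \<Rightarrow> 'a set set.
      (\<forall>i<m. Fs i \<subseteq> E \<and> comparability_edges (Fs i)) \<and>
      (\<Union>i<m. Fs i) = E)"

text \<open>The graph H_{9,4}: vertex (i,j,False) is v_{i,j}, vertex (i,j,True) is w_{i,j}.\<close>

definition H94_V :: "(nat \<times> nat \<times> bool) set" where
  "H94_V = {(i, j, b). i \<in> {1..9} \<and> j \<in> {1..4}}"

definition H94_E :: "(nat \<times> nat \<times> bool) set set" where
  "H94_E =
     {{(i, j, False), (i', j', False)} | i j i' j'.
        i \<in> {1..9} \<and> j \<in> {1..4} \<and> i' \<in> {1..9} \<and> j' \<in> {1..4} \<and>
        ((i = i') \<noteq> (j = j'))}
   \<union> {{(i, j, False), (i, j, True)} | i j. i \<in> {1..9} \<and> j \<in> {1..4}}"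

end

theory Submission
  imports Defs
begin


definition adj :: "nat \<times> nat \<times> bool \<Rightarrow> nat \<times> nat \<times> bool \<Rightarrow> bool" where
  "adj a b \<longleftrightarrow> (case a of (i,j,x) \<Rightarrow> case b of (i',j',y) \<Rightarrow>
     i \<in> {1..9} \<and> j \<in> {1..4} \<and> i' \<in> {1..9} \<and> j' \<in> {1..4} \<and>
     ((\<not>x \<and> \<not>y \<and> (i = i') \<noteq> (j = j')) \<or> (i = i' \<and> j = j' \<and> x \<noteq> y)))"

lemma adj_sym: "adj a b \<Longrightarrow> adj b a"
  unfolding adj_def by (auto split: prod.splits)

lemma E_iff1: assumes "{a,b} \<in> H94_E" shows "adj a b"
proof -
  from assms consider
    (c) i j i' j' where "{a,b} = {(i, j, False), (i', j', False)}"
        "i \<in> {1..9} \<and> j \<in> {1..4} \<and> i' \<in> {1..9} \<and> j' \<in> {1..4} \<and> ((i = i') \<noteq> (j = j'))"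
  | (p) i j where "{a,b} = {(i, j, False), (i, j, True)}" "i \<in> {1..9} \<and> j \<in> {1..4}"
    unfolding H94_E_def by blast
  then show ?thesis
  proof cases
    case c
    then have "adj (i, j, False) (i', j', False)" unfolding adj_def by auto
    with c(1) show ?thesis by (auto simp: doubleton_eq_iff intro: adj_sym)
  next
    case p
    then have "adj (i, j, False) (i, j, True)" unfolding adj_def by auto
    with p(1) show ?thesis by (auto simp: doubleton_eq_iff intro: adj_sym)
  qed
qed

lemma E_iff2: assumes "adj a b" shows "{a,b} \<in> H94_E"
proof -
  obtain i j x where a: "a = (i,j,x)" by (cases a) auto
  obtain i' j' y where b: "b = (i',j',y)" by (cases b) auto
  have h: "i \<in> {1..9} \<and> j \<in> {1..4} \<and> i' \<in> {1..9} \<and> j' \<in> {1..4} \<and>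
     ((\<not>x \<and> \<not>y \<and> (i = i') \<noteq> (j = j')) \<or> (i = i' \<and> j = j' \<and> x \<noteq> y))"
    using assms unfolding a b adj_def by simp
  show ?thesis
  proof (cases "\<not>x \<and> \<not>y \<and> (i = i') \<noteq> (j = j')")
    case True
    then show ?thesis using h unfolding a b H94_E_def by blast
  next
    case False
    then have "i = i' \<and> j = j' \<and> x \<noteq> y" using h by blast
    then have "{a,b} = {(i, j, False), (i, j, True)}" unfolding a b by (cases x) auto
    then show ?thesis using h unfolding H94_E_def by blast
  qed
qed

lemma E_iff: "{a,b} \<in> H94_E \<longleftrightarrow> adj a b"
  using E_iff1 E_iff2 by blast

lemma E_form: assumes "e \<in> H94_E" shows "\<exists>a b. e = {a,b} \<and> adj a b"
proof -
  have "\<exists>a b. e = {a,b}" using assms unfolding H94_E_def by blast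
  then obtain a b where "e = {a,b}" by blast
  then show ?thesis using assms E_iff by blast
qed

lemma adj_pend: "adj u (i,j,True) \<Longrightarrow> u = (i,j,False)"
  unfolding adj_def by (auto split: prod.splits)

lemma nonadj: "a \<noteq> c \<Longrightarrow> b \<noteq> d \<Longrightarrow> \<not> adj (a,b,False) (c,d,False)"
  unfolding adj_def by auto

lemma adj_row: "i \<in> {1..9} \<Longrightarrow> j \<in> {1..4} \<Longrightarrow> j' \<in> {1..4} \<Longrightarrow> j \<noteq> j' \<Longrightarrow> adj (i,j,False) (i,j',False)"
  unfolding adj_def by auto

lemma adj_col: "i \<in> {1..9} \<Longrightarrow> i' \<in> {1..9} \<Longrightarrow> j \<in> {1..4} \<Longrightarrow> i \<noteq> i' \<Longrightarrow> adj (i,j,False) (i',j,False)"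
  unfolding adj_def by auto

lemma adj_p: "i \<in> {1..9} \<Longrightarrow> j \<in> {1..4} \<Longrightarrow> adj (i,j,False) (i,j,True)"
  unfolding adj_def by auto



definition proper_rc :: "('r \<times> 'c) set \<Rightarrow> nat \<Rightarrow> ('r \<times> 'c \<Rightarrow> nat) \<Rightarrow> bool" where
  "proper_rc S d f \<longleftrightarrow> (\<forall>e\<in>S. f e < d) \<and>
     (\<forall>r c c'. (r,c) \<in> S \<longrightarrow> (r,c') \<in> S \<longrightarrow> c \<noteq> c' \<longrightarrow> f (r,c) \<noteq> f (r,c')) \<and>
     (\<forall>r r' c. (r,c) \<in> S \<longrightarrow> (r',c) \<in> S \<longrightarrow> r \<noteq> r' \<longrightarrow> f (r,c) \<noteq> f (r',c))"

inductive_set swapset :: "('r \<times> 'c) set \<Rightarrow> ('r \<times> 'c \<Rightarrow> nat) \<Rightarrow> nat \<Rightarrow> nat \<Rightarrow> 'c \<Rightarrow> ('r \<times> 'c) set"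
  for F f a b y0 where
  start: "(r,y0) \<in> F \<Longrightarrow> f (r,y0) = a \<Longrightarrow> (r,y0) \<in> swapset F f a b y0"
| rowstep: "(r,c) \<in> swapset F f a b y0 \<Longrightarrow> f (r,c) = a \<Longrightarrow> (r,c') \<in> F \<Longrightarrow> f (r,c') = b
     \<Longrightarrow> (r,c') \<in> swapset F f a b y0"
| colstep: "(r,c) \<in> swapset F f a b y0 \<Longrightarrow> f (r,c) = b \<Longrightarrow> (r',c) \<in> F \<Longrightarrow> f (r',c) = a
     \<Longrightarrow> (r',c) \<in> swapset F f a b y0"

lemma swap_I0p: "(r,c) \<in> swapset F f a b y0 \<Longrightarrow> (r,c) \<in> F \<and> (f (r,c) = a \<or> f (r,c) = b)"
  by (induction rule: swapset.induct) auto

lemma swap_I0: "e \<in> swapset F f a b y0 \<Longrightarrow> e \<in> F \<and> (f e = a \<or> f e = b)"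
  using swap_I0p[of "fst e" "snd e"] by simp

lemma swap_I1: "(r,c) \<in> swapset F f a b y0 \<Longrightarrow> \<exists>c'. (r,c') \<in> swapset F f a b y0 \<and> f (r,c') = a"
  by (induction rule: swapset.induct) (auto intro: swapset.intros)

lemma swap_I2: "(r,c) \<in> swapset F f a b y0 \<Longrightarrow> a \<noteq> b \<Longrightarrow> f (r,c) = a \<Longrightarrow>
   c = y0 \<or> (\<exists>r'. (r',c) \<in> swapset F f a b y0 \<and> f (r',c) = b)"
  by (induction rule: swapset.induct) auto

lemma konig_step:
  assumes fin: "finite F" and pf: "proper_rc F d f" and xF: "(x0,y0) \<notin> F"
    and a: "a < d" "\<forall>c. (x0,c) \<in> F \<longrightarrow> f (x0,c) \<noteq> a"
    and b: "b < d" "\<forall>r. (r,y0) \<in> F \<longrightarrow> f (r,y0) \<noteq> b"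
  shows "\<exists>g. proper_rc (insert (x0,y0) F) d g"
proof (cases "a = b")
  case True
  have "proper_rc (insert (x0,y0) F) d (f((x0,y0) := a))"
    using pf a b xF True unfolding proper_rc_def by (auto split: if_splits)
  then show ?thesis by blast
next
  case False
  define T where "T = swapset F f a b y0"
  define g where "g e = (if e \<in> T then (if f e = a then b else a) else f e)" for e
  have I0: "e \<in> T \<Longrightarrow> e \<in> F \<and> (f e = a \<or> f e = b)" for e unfolding T_def by (rule swap_I0)
  have rowinj: "(r,c) \<in> F \<Longrightarrow> (r,c') \<in> F \<Longrightarrow> f (r,c) = f (r,c') \<Longrightarrow> c = c'" for r c c'
    using pf unfolding proper_rc_def by blast
  have colinj: "(r,c) \<in> F \<Longrightarrow> (r',c) \<in> F \<Longrightarrow> f (r,c) = f (r',c) \<Longrightarrow> r = r'" for r r' c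
    using pf unfolding proper_rc_def by blast
  have Crow: "(r,c') \<in> T" if h: "(r,c) \<in> T" "(r,c') \<in> F" "f (r,c') = a \<or> f (r,c') = b" for r c c'
  proof -
    obtain c1 where c1: "(r,c1) \<in> T" "f (r,c1) = a" using swap_I1[of r c F f a b y0] h(1) unfolding T_def by blast
    show ?thesis
    proof (cases "f (r,c') = b")
      case True
      then show ?thesis using c1 h(2) unfolding T_def by (auto intro: swapset.rowstep)
    next
      case False
      then have "f (r,c') = a" using h(3) by blast
      then have "c' = c1" using rowinj[of r c' c1] c1 I0 h(2) by auto
      then show ?thesis using c1 by simp
    qed
  qed
  have Ccol: "(r',c) \<in> T" if "(r,c) \<in> T" "(r',c) \<in> F" "f (r',c) = a \<or> f (r',c) = b" for r r' c
  proof (cases "f (r,c) = b")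
    case True
    show ?thesis
    proof (cases "f (r',c) = a")
      case True
      then show ?thesis using \<open>f (r,c) = b\<close> that unfolding T_def by (auto intro: swapset.colstep)
    next
      case False
      then have "f (r',c) = b" using that(3) by blast
      then have "r' = r" using colinj[of r' c r] True I0 that by auto
      then show ?thesis using that by simp
    qed
  next
    case fa: False
    then have fa: "f (r,c) = a" using I0 that(1) by blast
    show ?thesis
    proof (cases "f (r',c) = a")
      case True
      then have "r' = r" using colinj[of r' c r] fa I0 that by auto
      then show ?thesis using that by simp
    next
      case False
      then have fb: "f (r',c) = b" using that(3) by blast
      have "c = y0 \<or> (\<exists>r''. (r'',c) \<in> T \<and> f (r'',c) = b)"
        using swap_I2[of r c F f a b y0] that(1) \<open>a \<noteq> b\<close> fa unfolding T_def by blast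
      then show ?thesis
      proof
        assume "c = y0"
        then show ?thesis using b(2) that(2) fb by blast
      next
        assume "\<exists>r''. (r'',c) \<in> T \<and> f (r'',c) = b"
        then obtain r'' where "(r'',c) \<in> T" "f (r'',c) = b" by blast
        then have "r'' = r'" using colinj[of r'' c r'] fb I0 that(2) by auto
        then show ?thesis using \<open>(r'',c) \<in> T\<close> by simp
      qed
    qed
  qed
  have notx: "(x0,c) \<notin> T" for c
  proof
    assume "(x0,c) \<in> T"
    then obtain c' where "(x0,c') \<in> T" "f (x0,c') = a" using swap_I1[of x0 c F f a b y0] unfolding T_def by blast
    then show False using a(2) I0 by blast
  qed
  have gd: "g e < d" if "e \<in> F" for e
    using pf that a b unfolding g_def proper_rc_def by auto
  have gne: "g e1 \<noteq> g e2" if "e1 \<in> F" "e2 \<in> F" "f e1 \<noteq> f e2"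
    and clos: "e1 \<in> T \<Longrightarrow> (f e2 = a \<or> f e2 = b) \<Longrightarrow> e2 \<in> T"
    and clos2: "e2 \<in> T \<Longrightarrow> (f e1 = a \<or> f e1 = b) \<Longrightarrow> e1 \<in> T" for e1 e2
  proof -
    consider "e1 \<in> T" "e2 \<in> T" | "e1 \<in> T" "e2 \<notin> T" | "e1 \<notin> T" "e2 \<in> T" | "e1 \<notin> T" "e2 \<notin> T"
      by blast
    then show ?thesis
    proof cases
      case 1
      have "f e1 = a \<or> f e1 = b" "f e2 = a \<or> f e2 = b" using I0[OF 1(1)] I0[OF 1(2)] by blast+
      then show ?thesis using 1 that(3) \<open>a \<noteq> b\<close> unfolding g_def by auto
    next
      case 2 then show ?thesis using clos I0 unfolding g_def by auto
    next
      case 3 then show ?thesis using clos2 I0 unfolding g_def by auto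
    qed (use that(3) in \<open>simp add: g_def\<close>)
  qed
  have pg: "proper_rc F d g"
    unfolding proper_rc_def
  proof (intro conjI allI impI ballI)
    fix e assume "e \<in> F" then show "g e < d" by (rule gd)
  next
    fix r c c' assume h: "(r,c) \<in> F" "(r,c') \<in> F" "c \<noteq> c'"
    show "g (r,c) \<noteq> g (r,c')"
    proof (rule gne)
      show "f (r,c) \<noteq> f (r,c')" using pf h unfolding proper_rc_def by blast
    qed (use h Crow in auto)
  next
    fix r r' c assume h: "(r,c) \<in> F" "(r',c) \<in> F" "r \<noteq> r'"
    show "g (r,c) \<noteq> g (r',c)"
    proof (rule gne)
      show "f (r,c) \<noteq> f (r',c)" using pf h unfolding proper_rc_def by blast
    qed (use h Ccol in auto)
  qed
  have rowx: "g (x0,c) \<noteq> a" if "(x0,c) \<in> F" for c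
    using notx a(2) that unfolding g_def by auto
  have coly: "g (r,y0) \<noteq> a" if "(r,y0) \<in> F" for r
  proof (cases "(r,y0) \<in> T")
    case True
    then have "f (r,y0) = a" using I0 b(2) by blast
    then show ?thesis using True \<open>a \<noteq> b\<close> unfolding g_def by auto
  next
    case False
    have "f (r,y0) \<noteq> a" using False that unfolding T_def by (auto intro: swapset.start)
    then show ?thesis using False unfolding g_def by auto
  qed
  have "proper_rc (insert (x0,y0) F) d (g((x0,y0) := a))"
    using pg a(1) rowx coly xF unfolding proper_rc_def by (auto split: if_splits)
  then show ?thesis by blast
qed

lemma missing_colour:
  assumes "finite A" "card A < d"
  shows "\<exists>a<d. a \<notin> h ` A"
proof (rule ccontr)
  assume "\<not> ?thesis"
  then have "{..<d} \<subseteq> h ` A" by auto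
  then have "d \<le> card (h ` A)" using card_mono[OF finite_imageI[OF assms(1)]] by fastforce
  also have "\<dots> \<le> card A" using card_image_le[OF assms(1)] .
  finally show False using assms(2) by simp
qed

lemma konig:
  fixes S :: "('r \<times> 'c) set"
  assumes "finite S"
  shows "(\<forall>r. card {c. (r,c) \<in> S} \<le> d) \<longrightarrow> (\<forall>c. card {r. (r,c) \<in> S} \<le> d) \<longrightarrow> (\<exists>f. proper_rc S d f)"
  using assms
proof (induction S rule: finite_induct)
  case empty
  then show ?case unfolding proper_rc_def by auto
next
  case (insert x F)
  obtain x0 y0 where x: "x = (x0,y0)" by (cases x)
  show ?case
  proof (intro impI)
    assume r: "\<forall>r. card {c. (r, c) \<in> insert x F} \<le> d" and c: "\<forall>c. card {r. (r, c) \<in> insert x F} \<le> d"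
    have finr: "finite {c. (r,c) \<in> G}" if "finite G" for r and G :: "('r \<times> 'c) set"
    proof -
      have "{c. (r,c) \<in> G} = snd ` (G \<inter> {e. fst e = r})" by force
      then show ?thesis using that by simp
    qed
    have finc: "finite {r. (r,c) \<in> G}" if "finite G" for c and G :: "('r \<times> 'c) set"
    proof -
      have "{r. (r,c) \<in> G} = fst ` (G \<inter> {e. snd e = c})" by force
      then show ?thesis using that by simp
    qed
    have rF: "card {c. (r,c) \<in> F} \<le> d" for r
    proof -
      have "card {c. (r,c) \<in> F} \<le> card {c. (r,c) \<in> insert x F}"
        by (rule card_mono[OF finr]) (use insert(1) in auto)
      then show ?thesis using r[rule_format, of r] by linarith
    qed
    have cF: "card {r. (r,c) \<in> F} \<le> d" for c
    proof -
      have "card {r. (r,c) \<in> F} \<le> card {r. (r,c) \<in> insert x F}"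
        by (rule card_mono[OF finc]) (use insert(1) in auto)
      then show ?thesis using c[rule_format, of c] by linarith
    qed
    obtain f where pf: "proper_rc F d f" using insert(3) rF cF by blast
    have "{c. (x0,c) \<in> insert x F} = insert y0 {c. (x0,c) \<in> F}" using x by auto
    moreover have "y0 \<notin> {c. (x0,c) \<in> F}" using insert(2) x by auto
    ultimately have "card {c. (x0,c) \<in> F} < d" using r[rule_format, of x0] finr[OF insert(1), of x0] by simp
    then have "card ((\<lambda>c. (x0,c)) ` {c. (x0,c) \<in> F}) < d" using card_image_le[OF finr[OF insert(1)]] le_less_trans by blast
    then obtain a where a: "a < d" "a \<notin> f ` (\<lambda>c. (x0,c)) ` {c. (x0,c) \<in> F}"
      using missing_colour finr[OF insert(1)] by blast
    have "{r. (r,y0) \<in> insert x F} = insert x0 {r. (r,y0) \<in> F}" using x by auto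
    moreover have "x0 \<notin> {r. (r,y0) \<in> F}" using insert(2) x by auto
    ultimately have "card {r. (r,y0) \<in> F} < d" using c[rule_format, of y0] finc[OF insert(1), of y0] by simp
    then have "card ((\<lambda>r. (r,y0)) ` {r. (r,y0) \<in> F}) < d" using card_image_le[OF finc[OF insert(1)]] le_less_trans by blast
    then obtain b where b: "b < d" "b \<notin> f ` (\<lambda>r. (r,y0)) ` {r. (r,y0) \<in> F}"
      using missing_colour finc[OF insert(1)] by blast
    have ha: "\<forall>c. (x0,c) \<in> F \<longrightarrow> f (x0,c) \<noteq> a" using a(2) by auto
    have hb: "\<forall>r. (r,y0) \<in> F \<longrightarrow> f (r,y0) \<noteq> b" using b(2) by auto
    have xF: "(x0,y0) \<notin> F" using insert(2) x by simp
    show "\<exists>f. proper_rc (insert x F) d f"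
      unfolding x by (rule konig_step[OF insert(1) pf xF a(1) ha b(1) hb])
  qed
qed



lemma card_bool2: "card (UNIV :: (bool \<times> bool) set) = 4"
proof -
  have h: "(UNIV :: (bool \<times> bool) set) = {(True,True),(True,False),(False,True),(False,False)}"
    by auto
  have "card {(True,True),(True,False),(False,True),(False,False)} = 4" by simp
  then show ?thesis by (simp only: h)
qed

lemma TO_D1: "transitive_orientation F R \<Longrightarrow> (u,v) \<in> R \<Longrightarrow> u \<noteq> v \<and> {u,v} \<in> F"
  unfolding transitive_orientation_def by fast
lemma TO_D2: "transitive_orientation F R \<Longrightarrow> e \<in> F \<Longrightarrow> \<exists>u v. e = {u,v} \<and> u \<noteq> v \<and> ((u,v) \<in> R \<or> (v,u) \<in> R)"
  unfolding transitive_orientation_def by fast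
lemma TO_D3: "transitive_orientation F R \<Longrightarrow> (u,v) \<in> R \<Longrightarrow> (v,u) \<notin> R"
  unfolding transitive_orientation_def by fast
lemma TO_D4: "transitive_orientation F R \<Longrightarrow> (u,v) \<in> R \<Longrightarrow> (v,w) \<in> R \<Longrightarrow> (u,w) \<in> R"
  unfolding transitive_orientation_def by (meson transD)
lemma no_2cover:
  assumes F1E: "F1 \<subseteq> H94_E" and F2E: "F2 \<subseteq> H94_E" and U: "F1 \<union> F2 = H94_E"
    and T1: "transitive_orientation F1 R1" and T2: "transitive_orientation F2 R2"
  shows False
proof -
  define R :: "bool \<Rightarrow> ((nat \<times> nat \<times> bool) \<times> (nat \<times> nat \<times> bool)) set"
    where "R k = (if k then R1 else R2)" for k
  have TO: "transitive_orientation (if k then F1 else F2) (R k)" for k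
    using T1 T2 unfolding R_def by (cases k) simp_all
  have FE: "(if k then F1 else F2) \<subseteq> H94_E" for k using F1E F2E by auto
  have Ra: "adj u v \<and> u \<noteq> v" if "(u,v) \<in> R k" for u v k
  proof -
    have "u \<noteq> v \<and> {u,v} \<in> (if k then F1 else F2)"
      using TO_D1[OF TO[of k] that] .
    then show ?thesis using FE[of k] E_iff by blast
  qed
  have Rb: "\<exists>k. (u,v) \<in> R k \<or> (v,u) \<in> R k" if "adj u v" for u v
  proof -
    have uv: "{u,v} \<in> H94_E" using that E_iff by blast
    have "\<exists>k. {u,v} \<in> (if k then F1 else F2)"
    proof (cases "{u,v} \<in> F1")
      case True then show ?thesis by (intro exI[of _ True]) simp
    next
      case False
      then have "{u,v} \<in> F2" using U uv by blast
      then show ?thesis by (intro exI[of _ False]) simp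
    qed
    then obtain k where k: "{u,v} \<in> (if k then F1 else F2)" by blast
    obtain a b where ab: "{u,v} = {a,b}" "(a,b) \<in> R k \<or> (b,a) \<in> R k"
      using TO_D2[OF TO[of k] k] by blast
    have "(u = a \<and> v = b) \<or> (u = b \<and> v = a)" using ab(1) by (simp only: doubleton_eq_iff)
    then show ?thesis using ab(2) by blast
  qed
  have Rc: "(v,u) \<notin> R k" if "(u,v) \<in> R k" for u v k
    using TO_D3[OF TO[of k] that] .
  have Rd: "(u,w) \<in> R k" if "(u,v) \<in> R k" "(v,w) \<in> R k" for u v w k
    using TO_D4[OF TO[of k] that] .
  have pend: "\<exists>k. (\<forall>u. (u,(i,j,False)) \<notin> R k) \<or> (\<forall>u. ((i,j,False),u) \<notin> R k)"
    if pij: "i \<in> {1..9}" "j \<in> {1..4}" for i j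
  proof -
    obtain k where k: "((i,j,False),(i,j,True)) \<in> R k \<or> ((i,j,True),(i,j,False)) \<in> R k"
      using Rb[OF adj_p[OF pij]] by blast
    then show ?thesis
    proof
      assume h: "((i,j,False),(i,j,True)) \<in> R k"
      have "(u,(i,j,False)) \<notin> R k" for u
      proof
        assume "(u,(i,j,False)) \<in> R k"
        then have "(u,(i,j,True)) \<in> R k" using Rd h by blast
        then have "u = (i,j,False)" using Ra adj_pend by blast
        then show False using Ra \<open>(u,(i,j,False)) \<in> R k\<close> by blast
      qed
      then show ?thesis by blast
    next
      assume h: "((i,j,True),(i,j,False)) \<in> R k"
      have "((i,j,False),u) \<notin> R k" for u
      proof
        assume "((i,j,False),u) \<in> R k"
        then have "((i,j,True),u) \<in> R k" using Rd h by blast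
        then have "u = (i,j,False)" using Ra adj_pend adj_sym by blast
        then show False using Ra \<open>((i,j,False),u) \<in> R k\<close> by blast
      qed
      then show ?thesis by blast
    qed
  qed
  define incol where "incol k i j = (\<exists>i'. ((i',j,False),(i,j,False)) \<in> R k)" for k i j
  define outcol where "outcol k i j = (\<exists>i'. ((i,j,False),(i',j,False)) \<in> R k)" for k i j
  define Xc where "Xc i j = (\<forall>k. \<not>(incol k i j \<and> outcol k i j))" for i j
  define Hm where "Hm k s i j = ((\<forall>j'\<in>{1..4}. j' \<noteq> j \<longrightarrow>
      (if s then ((i,j,False),(i,j',False)) \<in> R k else ((i,j',False),(i,j,False)) \<in> R k)) \<and>
      (\<forall>j'. ((i,j,False),(i,j',False)) \<notin> R (\<not>k) \<and> ((i,j',False),(i,j,False)) \<notin> R (\<not>k)))"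
    for k s i j
  define Hr where "Hr i j = (\<exists>k s. Hm k s i j)" for i j
  have claim1: "Xc i j \<or> Hr i j" if ij: "i \<in> {1..9}" "j \<in> {1..4}" for i j
  proof (rule ccontr)
    assume nc: "\<not> (Xc i j \<or> Hr i j)"
    then obtain k' i1 i2 where e1: "((i1,j,False),(i,j,False)) \<in> R k'"
      and e2: "((i,j,False),(i2,j,False)) \<in> R k'"
      unfolding Xc_def incol_def outcol_def by blast
    have i1: "i1 \<noteq> i" using Ra[OF e1] by blast
    have i2: "i2 \<noteq> i" using Ra[OF e2] by blast
    obtain k where k: "(\<forall>u. (u,(i,j,False)) \<notin> R k) \<or> (\<forall>u. ((i,j,False),u) \<notin> R k)"
      using pend[OF ij] by blast
    have "k' \<noteq> k" using k e1 e2 by blast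
    then have kk: "k' = (\<not>k)" by blast
    have norow: "((i,j,False),(i,j',False)) \<notin> R k' \<and> ((i,j',False),(i,j,False)) \<notin> R k'" for j'
    proof (intro conjI notI)
      assume h: "((i,j,False),(i,j',False)) \<in> R k'"
      then have "j' \<noteq> j" using Ra by blast
      have "((i1,j,False),(i,j',False)) \<in> R k'" using Rd e1 h by blast
      then show False using Ra nonadj[OF i1 \<open>j' \<noteq> j\<close>[symmetric]] by blast
    next
      assume h: "((i,j',False),(i,j,False)) \<in> R k'"
      then have "j' \<noteq> j" using Ra by blast
      have "((i,j',False),(i2,j,False)) \<in> R k'" using Rd e2 h by blast
      then show False using Ra nonadj[OF i2[symmetric] \<open>j' \<noteq> j\<close>] by blast
    qed
    define s where "s = (\<forall>u. (u,(i,j,False)) \<notin> R k)"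
    have "Hm k s i j"
      unfolding Hm_def
    proof (intro conjI ballI impI allI)
      fix j' assume j': "j' \<in> {1..4}" "j' \<noteq> j"
      obtain k'' where k'': "((i,j,False),(i,j',False)) \<in> R k'' \<or> ((i,j',False),(i,j,False)) \<in> R k''"
        using Rb[OF adj_row[OF ij j'(1) j'(2)[symmetric]]] by blast
      have "k'' \<noteq> k'" using k'' norow[of j'] by blast
      then have "k'' = k" using kk by blast
      then show "if s then ((i,j,False),(i,j',False)) \<in> R k else ((i,j',False),(i,j,False)) \<in> R k"
        using k'' k unfolding s_def by auto
    next
      fix j'
      show "((i,j,False),(i,j',False)) \<notin> R (\<not>k)" "((i,j',False),(i,j,False)) \<notin> R (\<not>k)"
        using norow kk by auto
    qed
    then show False using nc unfolding Hr_def by blast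
  qed
  have claim2: "card {i \<in> {1..9}. Xc i j} \<le> 4" if j: "j \<in> {1..4}" for j
  proof -
    have "inj_on (\<lambda>i. (incol True i j, incol False i j)) {i \<in> {1..9}. Xc i j}"
    proof (rule inj_onI)
      fix i i' assume i: "i \<in> {i \<in> {1..9}. Xc i j}" and i': "i' \<in> {i \<in> {1..9}. Xc i j}"
        and eq: "(incol True i j, incol False i j) = (incol True i' j, incol False i' j)"
      have eqk: "incol k i j = incol k i' j" for k using eq by (cases k) auto
      show "i = i'"
      proof (rule ccontr)
        assume "i \<noteq> i'"
        then obtain k where k: "((i,j,False),(i',j,False)) \<in> R k \<or> ((i',j,False),(i,j,False)) \<in> R k"
          using Rb[OF adj_col[of i i' j]] i i' j by auto
        then show False
        proof
          assume h: "((i,j,False),(i',j,False)) \<in> R k"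
          then have "incol k i' j" "outcol k i j" unfolding incol_def outcol_def by blast+
          then show False using eqk[of k] i unfolding Xc_def by blast
        next
          assume h: "((i',j,False),(i,j,False)) \<in> R k"
          then have "incol k i j" "outcol k i' j" unfolding incol_def outcol_def by blast+
          then show False using eqk[of k] i' unfolding Xc_def by blast
        qed
      qed
    qed
    then have "card {i \<in> {1..9}. Xc i j} \<le> card (UNIV :: (bool \<times> bool) set)"
      by (rule card_inj_on_le) auto
    then show ?thesis using card_bool2 by simp
  qed
  have pair3: "k = k' \<and> s \<noteq> s'"
    if "i \<in> {1..9}" "j \<in> {1..4}" "j' \<in> {1..4}" "j \<noteq> j'" "Hm k s i j" "Hm k' s' i j'" for i j j' k k' s s'
  proof -
    have e: "if s then ((i,j,False),(i,j',False)) \<in> R k else ((i,j',False),(i,j,False)) \<in> R k"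
      using that(3,4,5) unfolding Hm_def by auto
    have n: "((i,j',False),(i,j,False)) \<notin> R (\<not>k') \<and> ((i,j,False),(i,j',False)) \<notin> R (\<not>k')"
      using that(6) unfolding Hm_def by blast
    have kk: "k = k'" using e n by (cases k; cases k'; cases s; auto)
    have e': "if s' then ((i,j',False),(i,j,False)) \<in> R k' else ((i,j,False),(i,j',False)) \<in> R k'"
      using that(2,4,6) unfolding Hm_def by auto
    have "s \<noteq> s'" using e e' kk Rc by (cases s; cases s'; auto)
    then show ?thesis using kk by blast
  qed
  have claim3: "card {j \<in> {1..4}. Hr i j} \<le> 2" if i: "i \<in> {1..9}" for i
  proof -
    define f where "f j = (SOME s. \<exists>k. Hm k s i j)" for j
    have fj: "\<exists>k. Hm k (f j) i j" if "Hr i j" for j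
      using that unfolding f_def Hr_def by (metis (mono_tags) someI_ex)
    have "inj_on f {j \<in> {1..4}. Hr i j}"
    proof (rule inj_onI)
      fix j j' assume j: "j \<in> {j \<in> {1..4}. Hr i j}" and j': "j' \<in> {j \<in> {1..4}. Hr i j}"
        and eq: "f j = f j'"
      show "j = j'"
      proof (rule ccontr)
        assume ne: "j \<noteq> j'"
        obtain k where k: "Hm k (f j) i j" using fj j by blast
        obtain k' where k': "Hm k' (f j') i j'" using fj j' by blast
        show False using pair3[OF i _ _ ne k k'] j j' eq by blast
      qed
    qed
    then have "card {j \<in> {1..4}. Hr i j} \<le> card (UNIV :: bool set)"
      by (rule card_inj_on_le) auto
    then show ?thesis by (simp add: card_UNIV_bool)
  qed
  define A where "A = (\<Union>j\<in>{1..4::nat}. (\<lambda>i. (i,j)) ` {i \<in> {1..9}. Xc i j})"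
  define B where "B = (\<Union>i\<in>{1..9::nat}. (\<lambda>j. (i,j)) ` {j \<in> {1..4}. Hr i j})"
  have sub: "{1..9::nat} \<times> {1..4::nat} \<subseteq> A \<union> B"
  proof
    fix c assume "c \<in> {1..9::nat} \<times> {1..4::nat}"
    then obtain i j where c: "c = (i,j)" "i \<in> {1..9}" "j \<in> {1..4}" by blast
    then show "c \<in> A \<union> B" using claim1[OF c(2,3)] unfolding A_def B_def by blast
  qed
  have cA: "card A \<le> 16"
  proof -
    have "card A \<le> (\<Sum>j\<in>{1..4::nat}. card ((\<lambda>i. (i,j)) ` {i \<in> {1..9}. Xc i j}))"
      unfolding A_def by (rule card_UN_le) simp
    also have "\<dots> \<le> (\<Sum>j\<in>{1..4::nat}. 4)"
    proof (rule sum_mono)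
      fix j :: nat assume "j \<in> {1..4}"
      then show "card ((\<lambda>i. (i,j)) ` {i \<in> {1..9}. Xc i j}) \<le> 4"
        using le_trans[OF card_image_le claim2] by simp
    qed
    finally show ?thesis by simp
  qed
  have cB: "card B \<le> 18"
  proof -
    have "card B \<le> (\<Sum>i\<in>{1..9::nat}. card ((\<lambda>j. (i,j)) ` {j \<in> {1..4}. Hr i j}))"
      unfolding B_def by (rule card_UN_le) simp
    also have "\<dots> \<le> (\<Sum>i\<in>{1..9::nat}. 2)"
    proof (rule sum_mono)
      fix i :: nat assume "i \<in> {1..9}"
      then show "card ((\<lambda>j. (i,j)) ` {j \<in> {1..4}. Hr i j}) \<le> 2"
        using le_trans[OF card_image_le claim3] by simp
    qed
    finally show ?thesis by simp
  qed
  have finAB: "finite A" "finite B" unfolding A_def B_def by auto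
  have "card ({1..9::nat} \<times> {1..4::nat}) \<le> card (A \<union> B)"
    using sub finAB by (intro card_mono) auto
  also have "\<dots> \<le> card A + card B" by (rule card_Un_le)
  finally have "card ({1..9::nat} \<times> {1..4::nat}) \<le> card A + card B" .
  moreover have "card ({1..9::nat} \<times> {1..4::nat}) = 36" by simp
  ultimately show False using cA cB by linarith
qed



lemma finite_V: "finite H94_V"
proof -
  have "H94_V \<subseteq> {1..9::nat} \<times> {1..4::nat} \<times> (UNIV :: bool set)" unfolding H94_V_def by auto
  then show ?thesis by (rule finite_subset) simp
qed

lemma perfect_S:
  assumes SV: "S \<subseteq> H94_V"
  shows "clique_number S (induced_edges H94_E S) = chromatic_number S (induced_edges H94_E S)"
proof -
  define Es where "Es = induced_edges H94_E S"
  have finS: "finite S" using finite_subset[OF SV finite_V] .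
  have Es_iff: "{u,v} \<in> Es \<longleftrightarrow> adj u v \<and> u \<in> S \<and> v \<in> S" for u v
    by (simp add: Es_def induced_edges_def E_iff)
  have Sr: "i \<in> {1..9} \<and> j \<in> {1..4}" if "(i,j,x) \<in> S" for i j x
    using SV that unfolding H94_V_def by auto
  define Cl where "Cl = {K. is_clique S Es K}"
  have finCl: "finite Cl"
  proof -
    have "Cl \<subseteq> Pow S" unfolding Cl_def is_clique_def by auto
    then show ?thesis using finS by (simp add: finite_subset)
  qed
  define d where "d = Max (card ` Cl)"
  have dcl: "clique_number S Es = d" unfolding clique_number_def d_def Cl_def ..
  have emp: "{} \<in> Cl" unfolding Cl_def is_clique_def by simp
  have cl_le: "card K \<le> d" if "is_clique S Es K" for K
    unfolding d_def using finCl that unfolding Cl_def by (intro Max_ge) auto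
  obtain K0 where K0: "is_clique S Es K0" "card K0 = d"
  proof -
    have "d \<in> card ` Cl" unfolding d_def using finCl emp by (intro Max_in) auto
    then show ?thesis using that unfolding Cl_def by blast
  qed
  have lower: "d \<le> k" if "proper_colouring S Es k f" for k f
  proof -
    have "inj_on f K0"
    proof (rule inj_onI)
      fix u v assume "u \<in> K0" "v \<in> K0" "f u = f v"
      then show "u = v" using K0(1) that unfolding is_clique_def proper_colouring_def by blast
    qed
    moreover have "f ` K0 \<subseteq> {..<k}" using K0(1) that unfolding is_clique_def proper_colouring_def by auto
    ultimately have "card K0 \<le> card {..<k}" by (intro card_inj_on_le) auto
    then show ?thesis using K0(2) by simp
  qed
  define C where "C = {(i,j). (i,j,False) \<in> S}"
  have finC: "finite C"
  proof -
    have "C \<subseteq> {1..9::nat} \<times> {1..4::nat}" unfolding C_def using Sr by auto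
    then show ?thesis by (rule finite_subset) simp
  qed
  have rowdeg: "card {c. (r,c) \<in> C} \<le> d" for r
  proof -
    define K where "K = (\<lambda>c. (r,c,False)) ` {c. (r,c) \<in> C}"
    have "is_clique S Es K"
      unfolding is_clique_def
    proof (intro conjI ballI impI)
      show "K \<subseteq> S" unfolding K_def C_def by auto
    next
      fix u v assume "u \<in> K" "v \<in> K" "u \<noteq> v"
      then obtain c c' where uv: "u = (r,c,False)" "v = (r,c',False)" "(r,c,False) \<in> S" "(r,c',False) \<in> S" "c \<noteq> c'"
        unfolding K_def C_def by auto
      then show "{u,v} \<in> Es" unfolding Es_iff using adj_row Sr by auto
    qed
    then have "card K \<le> d" by (rule cl_le)
    moreover have "card K = card {c. (r,c) \<in> C}" unfolding K_def by (rule card_image) (auto simp: inj_on_def)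
    ultimately show ?thesis by simp
  qed
  have coldeg: "card {r. (r,c) \<in> C} \<le> d" for c
  proof -
    define K where "K = (\<lambda>r. (r,c,False)) ` {r. (r,c) \<in> C}"
    have "is_clique S Es K"
      unfolding is_clique_def
    proof (intro conjI ballI impI)
      show "K \<subseteq> S" unfolding K_def C_def by auto
    next
      fix u v assume "u \<in> K" "v \<in> K" "u \<noteq> v"
      then obtain r r' where uv: "u = (r,c,False)" "v = (r',c,False)" "(r,c,False) \<in> S" "(r',c,False) \<in> S" "r \<noteq> r'"
        unfolding K_def C_def by auto
      then show "{u,v} \<in> Es" unfolding Es_iff using adj_col Sr by auto
    qed
    then have "card K \<le> d" by (rule cl_le)
    moreover have "card K = card {r. (r,c) \<in> C}" unfolding K_def by (rule card_image) (auto simp: inj_on_def)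
    ultimately show ?thesis by simp
  qed
  obtain f0 where f0: "proper_rc C d f0" using konig[OF finC] rowdeg coldeg by blast
  define col where "col v = (case v of (i,j,b) \<Rightarrow>
      if b then (if (i,j,False) \<in> S \<and> f0 (i,j) = 0 then 1 else 0) else f0 (i,j))" for v
  have single: "1 \<le> d" if "v \<in> S" for v
  proof -
    have "is_clique S Es {v}" using that unfolding is_clique_def by auto
    then show ?thesis using cl_le by fastforce
  qed
  have pair: "2 \<le> d" if "(i,j,False) \<in> S" "(i,j,True) \<in> S" for i j
  proof -
    have "{(i,j,False),(i,j,True)} \<in> Es" unfolding Es_iff using that adj_p Sr by auto
    then have "is_clique S Es {(i,j,False),(i,j,True)}" using that unfolding is_clique_def
      by (auto simp: insert_commute)
    then show ?thesis using cl_le by fastforce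
  qed
  have pc: "proper_colouring S Es d col"
    unfolding proper_colouring_def
  proof (intro conjI ballI impI)
    fix v assume v: "v \<in> S"
    obtain i j b where vv: "v = (i,j,b)" by (cases v) auto
    show "col v < d"
    proof (cases b)
      case True
      then show ?thesis using v vv single[OF v] pair[of i j] unfolding col_def by auto
    next
      case False
      then have "(i,j) \<in> C" using v vv unfolding C_def by auto
      then show ?thesis using f0 False vv unfolding col_def proper_rc_def by auto
    qed
  next
    fix u v assume u: "u \<in> S" and v: "v \<in> S" and e: "{u,v} \<in> Es"
    obtain i j x where uu: "u = (i,j,x)" by (cases u) auto
    obtain i' j' y where vv: "v = (i',j',y)" by (cases v) auto
    have a: "adj u v" using e Es_iff by blast
    then consider "\<not>x \<and> \<not>y \<and> (i = i') \<noteq> (j = j')" | "i = i' \<and> j = j' \<and> x \<noteq> y"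
      unfolding uu vv adj_def by auto
    then show "col u \<noteq> col v"
    proof cases
      case 1
      then have "(i,j) \<in> C" "(i',j') \<in> C" using u v uu vv unfolding C_def by auto
      then show ?thesis using 1 f0 uu vv unfolding col_def proper_rc_def by auto
    next
      case 2
      then show ?thesis using u v uu vv unfolding col_def by (cases x) auto
    qed
  qed
  have "chromatic_number S Es = d"
    unfolding chromatic_number_def
    by (rule Least_equality) (use pc lower in auto)
  then show ?thesis using dcl unfolding Es_def by simp
qed

lemma perfect_H: "perfect H94_V H94_E"
  unfolding perfect_def using perfect_S by blast



definition Frow :: "(nat \<times> nat \<times> bool) set set" where
  "Frow = {{(i,j,False),(i,j',False)} | i j j'. i \<in> {1..9} \<and> j \<in> {1..4} \<and> j' \<in> {1..4} \<and> j \<noteq> j'}"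
definition Fcol :: "(nat \<times> nat \<times> bool) set set" where
  "Fcol = {{(i,j,False),(i',j,False)} | i i' j. i \<in> {1..9} \<and> i' \<in> {1..9} \<and> j \<in> {1..4} \<and> i \<noteq> i'}"
definition Fpen :: "(nat \<times> nat \<times> bool) set set" where
  "Fpen = {{(i,j,False),(i,j,True)} | i j. i \<in> {1..9} \<and> j \<in> {1..4}}"
definition Rrow :: "((nat \<times> nat \<times> bool) \<times> (nat \<times> nat \<times> bool)) set" where
  "Rrow = {((i,j,False),(i,j',False)) | i j j'. i \<in> {1..9} \<and> j \<in> {1..4} \<and> j' \<in> {1..4} \<and> j < j'}"
definition Rcol :: "((nat \<times> nat \<times> bool) \<times> (nat \<times> nat \<times> bool)) set" where
  "Rcol = {((i,j,False),(i',j,False)) | i i' j. i \<in> {1..9} \<and> i' \<in> {1..9} \<and> j \<in> {1..4} \<and> i < i'}"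
definition Rpen :: "((nat \<times> nat \<times> bool) \<times> (nat \<times> nat \<times> bool)) set" where
  "Rpen = {((i,j,False),(i,j,True)) | i j. i \<in> {1..9} \<and> j \<in> {1..4}}"

lemma to_row: "transitive_orientation Frow Rrow"
  unfolding transitive_orientation_def
proof (intro conjI)
  show "\<forall>(u, v)\<in>Rrow. u \<noteq> v \<and> {u, v} \<in> Frow" unfolding Rrow_def Frow_def by fastforce
  show "\<forall>e\<in>Frow. \<exists>u v. e = {u, v} \<and> u \<noteq> v \<and> ((u, v) \<in> Rrow \<or> (v, u) \<in> Rrow)"
  proof
    fix e assume "e \<in> Frow"
    then obtain i j j' where e: "e = {(i,j,False),(i,j',False)}" "i \<in> {1..9}" "j \<in> {1..4}" "j' \<in> {1..4}" "j \<noteq> j'"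
      unfolding Frow_def by blast
    show "\<exists>u v. e = {u, v} \<and> u \<noteq> v \<and> ((u, v) \<in> Rrow \<or> (v, u) \<in> Rrow)"
    proof (cases "j < j'")
      case True then show ?thesis using e unfolding Rrow_def by blast
    next
      case False then have "j' < j" using e(5) by simp
      then show ?thesis using e unfolding Rrow_def by blast
    qed
  qed
  show "\<forall>u v. (u, v) \<in> Rrow \<longrightarrow> (v, u) \<notin> Rrow" unfolding Rrow_def by auto
  show "trans Rrow" unfolding Rrow_def trans_def by auto
qed

lemma to_col: "transitive_orientation Fcol Rcol"
  unfolding transitive_orientation_def
proof (intro conjI)
  show "\<forall>(u, v)\<in>Rcol. u \<noteq> v \<and> {u, v} \<in> Fcol" unfolding Rcol_def Fcol_def by fastforce
  show "\<forall>e\<in>Fcol. \<exists>u v. e = {u, v} \<and> u \<noteq> v \<and> ((u, v) \<in> Rcol \<or> (v, u) \<in> Rcol)"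
  proof
    fix e assume "e \<in> Fcol"
    then obtain i i' j where e: "e = {(i,j,False),(i',j,False)}" "i \<in> {1..9}" "i' \<in> {1..9}" "j \<in> {1..4}" "i \<noteq> i'"
      unfolding Fcol_def by blast
    show "\<exists>u v. e = {u, v} \<and> u \<noteq> v \<and> ((u, v) \<in> Rcol \<or> (v, u) \<in> Rcol)"
    proof (cases "i < i'")
      case True then show ?thesis using e unfolding Rcol_def by blast
    next
      case False then have "i' < i" using e(5) by simp
      then show ?thesis using e unfolding Rcol_def by blast
    qed
  qed
  show "\<forall>u v. (u, v) \<in> Rcol \<longrightarrow> (v, u) \<notin> Rcol" unfolding Rcol_def by auto
  show "trans Rcol" unfolding Rcol_def trans_def by auto
qed

lemma to_pen: "transitive_orientation Fpen Rpen"
  unfolding transitive_orientation_def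
proof (intro conjI)
  show "\<forall>(u, v)\<in>Rpen. u \<noteq> v \<and> {u, v} \<in> Fpen" unfolding Rpen_def Fpen_def by fastforce
  show "\<forall>e\<in>Fpen. \<exists>u v. e = {u, v} \<and> u \<noteq> v \<and> ((u, v) \<in> Rpen \<or> (v, u) \<in> Rpen)"
    unfolding Rpen_def Fpen_def by blast
  show "\<forall>u v. (u, v) \<in> Rpen \<longrightarrow> (v, u) \<notin> Rpen" unfolding Rpen_def by auto
  show "trans Rpen" unfolding Rpen_def trans_def by auto
qed

lemma E_split: "H94_E = Frow \<union> Fcol \<union> Fpen"
proof (intro equalityI subsetI)
  fix e assume "e \<in> H94_E"
  then consider (c) i j i' j' where "e = {(i, j, False), (i', j', False)}" "i \<in> {1..9}" "j \<in> {1..4}" "i' \<in> {1..9}" "j' \<in> {1..4}"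
      "(i = i') \<noteq> (j = j')"
    | (p) i j where "e = {(i, j, False), (i, j, True)}" "i \<in> {1..9}" "j \<in> {1..4}"
    unfolding H94_E_def by blast
  then show "e \<in> Frow \<union> Fcol \<union> Fpen"
  proof cases
    case c
    show ?thesis
    proof (cases "i = i'")
      case True then have "e \<in> Frow" unfolding Frow_def using c by blast
      then show ?thesis by blast
    next
      case False then have "j = j'" using c(6) by blast
      then have "e \<in> Fcol" unfolding Fcol_def using c False by blast
      then show ?thesis by blast
    qed
  next
    case p
    then have "e \<in> Fpen" unfolding Fpen_def by blast
    then show ?thesis by blast
  qed
next
  fix e assume "e \<in> Frow \<union> Fcol \<union> Fpen"
  then show "e \<in> H94_E" unfolding H94_E_def Frow_def Fcol_def Fpen_def by blast
qed

lemma disj1: "Frow \<inter> Fcol = {}"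
  unfolding Frow_def Fcol_def by (auto simp: doubleton_eq_iff)
lemma disj2: "Frow \<inter> Fpen = {}"
  unfolding Frow_def Fpen_def by (auto simp: doubleton_eq_iff)
lemma disj3: "Fcol \<inter> Fpen = {}"
  unfolding Fcol_def Fpen_def by (auto simp: doubleton_eq_iff)

definition Fs3 :: "nat \<Rightarrow> (nat \<times> nat \<times> bool) set set" where
  "Fs3 n = (if n = 0 then Frow else if n = 1 then Fcol else Fpen)"

lemma Fs3_a: "\<forall>i<3. Fs3 i \<subseteq> H94_E \<and> comparability_edges (Fs3 i)"
proof -
  have c: "comparability_edges Frow" "comparability_edges Fcol" "comparability_edges Fpen"
    unfolding comparability_edges_def using to_row to_col to_pen by blast+
  show ?thesis using c E_split unfolding Fs3_def by (auto simp: less_Suc_eq numeral_3_eq_3)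
qed

lemma Fs3_b: "(\<Union>i<3. Fs3 i) = H94_E"
proof -
  have l3: "{..<3::nat} = {0,1,2}" by auto
  show ?thesis unfolding l3 Fs3_def using E_split by auto
qed

lemma Fs3_c: "\<forall>i<3. \<forall>j<3. i \<noteq> j \<longrightarrow> Fs3 i \<inter> Fs3 j = {}"
  using disj1 disj2 disj3 unfolding Fs3_def by (auto simp: less_Suc_eq numeral_3_eq_3)

lemma comp_empty: "comparability_edges {}"
  unfolding comparability_edges_def transitive_orientation_def
  by (rule exI[of _ "{}"]) simp

lemma no_small_cover:
  fixes m :: nat and Fs :: "nat \<Rightarrow> (nat \<times> nat \<times> bool) set set"
  assumes m: "m < 3" and h: "\<forall>i<m. Fs i \<subseteq> H94_E \<and> comparability_edges (Fs i)"
    and U: "(\<Union>i<m. Fs i) = H94_E"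
  shows False
proof -
  define G where "G i = (if i < m then Fs i else {})" for i
  have G: "G i \<subseteq> H94_E \<and> comparability_edges (G i)" for i
    using h comp_empty unfolding G_def by auto
  have "(\<Union>i<m. Fs i) = G 0 \<union> G 1"
  proof -
    have l: "{..<0::nat} = {}" "{..<1::nat} = {0}" "{..<2::nat} = {0,1}" by auto
    consider "m = 0" | "m = 1" | "m = 2" using m by linarith
    then show ?thesis
    proof cases
      case 1 then show ?thesis unfolding G_def using l by simp
    next
      case 2 then show ?thesis unfolding G_def using l by simp
    next
      case 3 then show ?thesis unfolding G_def using l by simp
    qed
  qed
  then have GU: "G 0 \<union> G 1 = H94_E" using U by simp
  obtain R1 where "transitive_orientation (G 0) R1" using G[of 0] unfolding comparability_edges_def by blast
  moreover obtain R2 where "transitive_orientation (G 1) R2" using G[of 1] unfolding comparability_edges_def by blast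
  ultimately show False using no_2cover[OF _ _ GU] G by blast
qed

lemma cover3: "comp_cover_number H94_E = 3"
  unfolding comp_cover_number_def
proof (rule Least_equality)
  show "\<exists>Fs :: nat \<Rightarrow> (nat \<times> nat \<times> bool) set set. (\<forall>i<3. Fs i \<subseteq> H94_E \<and> comparability_edges (Fs i)) \<and> (\<Union>i<3. Fs i) = H94_E"
    by (rule exI[of _ Fs3]) (intro conjI Fs3_a Fs3_b)
next
  fix m assume "\<exists>Fs :: nat \<Rightarrow> (nat \<times> nat \<times> bool) set set. (\<forall>i<m. Fs i \<subseteq> H94_E \<and> comparability_edges (Fs i)) \<and> (\<Union>i<m. Fs i) = H94_E"
  then obtain Fs :: "nat \<Rightarrow> (nat \<times> nat \<times> bool) set set" where
    "(\<forall>i<m. Fs i \<subseteq> H94_E \<and> comparability_edges (Fs i))" "(\<Union>i<m. Fs i) = H94_E" by blast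
  show "3 \<le> m"
  proof (rule ccontr)
    assume "\<not> 3 \<le> m"
    then have "m < 3" by simp
    then show False using no_small_cover \<open>(\<forall>i<m. Fs i \<subseteq> H94_E \<and> comparability_edges (Fs i))\<close> \<open>(\<Union>i<m. Fs i) = H94_E\<close> by blast
  qed
qed

lemma part3: "comp_partition_number H94_E = 3"
  unfolding comp_partition_number_def
proof (rule Least_equality)
  show "\<exists>Fs :: nat \<Rightarrow> (nat \<times> nat \<times> bool) set set. (\<forall>i<3. Fs i \<subseteq> H94_E \<and> comparability_edges (Fs i)) \<and> (\<Union>i<3. Fs i) = H94_E \<and>
      (\<forall>i<3. \<forall>j<3. i \<noteq> j \<longrightarrow> Fs i \<inter> Fs j = {})"
    by (rule exI[of _ Fs3]) (intro conjI Fs3_a Fs3_b Fs3_c)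
next
  fix m assume "\<exists>Fs :: nat \<Rightarrow> (nat \<times> nat \<times> bool) set set. (\<forall>i<m. Fs i \<subseteq> H94_E \<and> comparability_edges (Fs i)) \<and> (\<Union>i<m. Fs i) = H94_E \<and>
      (\<forall>i<m. \<forall>j<m. i \<noteq> j \<longrightarrow> Fs i \<inter> Fs j = {})"
  then obtain Fs :: "nat \<Rightarrow> (nat \<times> nat \<times> bool) set set" where
    h: "(\<forall>i<m. Fs i \<subseteq> H94_E \<and> comparability_edges (Fs i)) \<and> (\<Union>i<m. Fs i) = H94_E \<and>
      (\<forall>i<m. \<forall>j<m. i \<noteq> j \<longrightarrow> Fs i \<inter> Fs j = {})" by (rule exE)
  show "3 \<le> m"
  proof (rule ccontr)
    assume "\<not> 3 \<le> m"
    then have m3: "m < 3" by simp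
    show False by (rule no_small_cover[OF m3 conjunct1[OF h] conjunct1[OF conjunct2[OF h]]])
  qed
qed

theorem proposition2:
  shows "perfect H94_V H94_E \<and> comp_partition_number H94_E = 3 \<and> comp_cover_number H94_E = 3"
  using perfect_H part3 cover3 by blast

end
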